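(* Let $\Sigma$ be a finite set of tokens, let $q$ be a query, and let $\pi_\theta$, $\pi_{\theta_{old}}$, $\pi_{\theta_{ref}}$ be policies, i.e. conditional distributions assigning a positive probability $\pi(x \mid q, y)$ to each token $x\in\Sigma$ given $q$ and a prefix $y\in\Sigma^*$. Let $\mathbb{G}=(g_1,\dots,g_k)$ be a group of $k\ge 1$ nonempty trajectories $g_i\in\Sigma^*$ (e.g. sampled from $\pi_\theta(\cdot\mid q)$), with real outcome-level rewards $r_1,\dots,r_k$, and assume $r_{std}(\mathbb{G})\neq 0$. Then $$L_{GRPO}(\mathbb{G}) = L_{PRM}(\mathbb{G}),$$ where $$L_{GRPO}(\mathbb{G})=\frac{1}{\sum_{i=1}^k \mathrm{len}(g_i)}\sum_{i=1}^k\sum_{t=0}^{\mathrm{len}(g_i)-1}\big(P_{i,t}\, a_i - D_{i,t}\big),\qquad L_{PRM}(\mathbb{G})=\frac{1}{\sum_{i=1}^k \mathrm{len}(g_i)}\sum_{i=1}^k\sum_{t=0}^{\mathrm{len}(g_i)-1}\big(P_{i,t}\, A_{i,t} - D_{i,t}\big),$$ with all quantities as defined in the context.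
   Context: For a trajectory $g_i$, $\mathrm{len}(g_i)$ is its number of tokens, $g_i[t]$ (for $0\le t<\mathrm{len}(g_i)$) is its $t$-th token (0-indexed), and $g_i[:t]$ is the prefix consisting of its first $t$ tokens. $r_{mean}(\mathbb{G})=\frac1k\sum_{i=1}^k r_i$ and $r_{std}(\mathbb{G})$ is the standard deviation of $r_1,\dots,r_k$. The (outcome-level GRPO) advantage is $a_i=(r_i-r_{mean}(\mathbb{G}))/r_{std}(\mathbb{G})$. For $0\le t<\mathrm{len}(g_i)$: $P_{i,t}=\dfrac{\pi_\theta(g_i[t]\mid q,g_i[:t])}{\pi_{\theta_{old}}(g_i[t]\mid q,g_i[:t])}$ and $D_{i,t}=\dfrac{\pi_{\theta_{ref}}(g_i[t]\mid q,g_i[:t])}{\pi_\theta(g_i[t]\mid q,g_i[:t])}-\ln\dfrac{\pi_{\theta_{ref}}(g_i[t]\mid q,g_i[:t])}{\pi_\theta(g_i[t]\mid q,g_i[:t])}-1$. Process steps: the trajectories of $\mathbb{G}$ form a prefix tree whose nodes ("process sets") are sets of trajectories sharing a common prefix. For $0\le t<\mathrm{len}(g_i)$, the process set containing token $t$ of $g_i$ is $\lambda^{(i,t)}=\{g_j\in\mathbb{G} : \mathrm{len}(g_j)>t \text{ and } g_j[:t+1]=g_i[:t+1]\}$ (the set of trajectories that agree with $g_i$ on its first $t+1$ tokens). The step-level (Monte Carlo) reward of a process set $\lambda$ is $\hat R(\lambda)=\frac{1}{|\lambda|}\sum_{g_j\in\lambda} r_j$; the token-level reward is $R_{i,t}=\hat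 R(\lambda^{(i,t)})$, and the step-level advantage is $A_{i,t}=(R_{i,t}-r_{mean}(\mathbb{G}))/r_{std}(\mathbb{G})$. *)

theory Defs
  imports "HOL-Analysis.Analysis"
begin

text \<open>A policy: p q y x is the probability of next token x given query q and prefix y.\<close>
type_synonym ('q, 'a) policy = "'q \<Rightarrow> 'a list \<Rightarrow> 'a \<Rightarrow> real"

definition is_policy :: "'a set \<Rightarrow> ('q, 'a) policy \<Rightarrow> bool" where
  "is_policy \<Sigma> p \<longleftrightarrow>
     (\<forall>q y. set y \<subseteq> \<Sigma> \<longrightarrow> (\<forall>x\<in>\<Sigma>. p q y x > 0) \<and> (\<Sum>x\<in>\<Sigma>. p q y x) = 1)"

text \<open>Group G = (g_0,...,g_{k-1}) given by a function on indices below k (0-based).\<close>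
definition r_mean :: "nat \<Rightarrow> (nat \<Rightarrow> real) \<Rightarrow> real" where
  "r_mean k r = (\<Sum>i<k. r i) / real k"

definition r_std :: "nat \<Rightarrow> (nat \<Rightarrow> real) \<Rightarrow> real" where
  "r_std k r = sqrt ((\<Sum>i<k. (r i - r_mean k r)^2) / real k)"

definition adv :: "nat \<Rightarrow> (nat \<Rightarrow> real) \<Rightarrow> nat \<Rightarrow> real" where
  "adv k r i = (r i - r_mean k r) / r_std k r"

definition ratioP :: "('q, 'a) policy \<Rightarrow> ('q, 'a) policy \<Rightarrow> 'q \<Rightarrow> 'a list \<Rightarrow> nat \<Rightarrow> real" where
  "ratioP p_th p_old q gi t = p_th q (take t gi) (gi ! t) / p_old q (take t gi) (gi ! t)"

definition klD :: "('q, 'a) policy \<Rightarrow> ('q, 'a) policy \<Rightarrow> 'q \<Rightarrow> 'a list \<Rightarrow> nat \<Rightarrow> real" where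
  "klD p_th p_ref q gi t =
     (let z = p_ref q (take t gi) (gi ! t) / p_th q (take t gi) (gi ! t) in z - ln z - 1)"

definition process_set :: "nat \<Rightarrow> (nat \<Rightarrow> 'a list) \<Rightarrow> nat \<Rightarrow> nat \<Rightarrow> nat set" where
  "process_set k g i t =
     {j. j < k \<and> length (g j) > t \<and> take (t+1) (g j) = take (t+1) (g i)}"

definition step_reward :: "nat \<Rightarrow> (nat \<Rightarrow> 'a list) \<Rightarrow> (nat \<Rightarrow> real) \<Rightarrow> nat \<Rightarrow> nat \<Rightarrow> real" where
  "step_reward k g r i t =
     (let lam = process_set k g i t in (\<Sum>j\<in>lam. r j) / real (card lam))"

definition step_adv :: "nat \<Rightarrow> (nat \<Rightarrow> 'a list) \<Rightarrow> (nat \<Rightarrow> real) \<Rightarrow> nat \<Rightarrow> nat \<Rightarrow> real" where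
  "step_adv k g r i t = (step_reward k g r i t - r_mean k r) / r_std k r"

definition L_GRPO :: "('q, 'a) policy \<Rightarrow> ('q, 'a) policy \<Rightarrow> ('q, 'a) policy \<Rightarrow> 'q
    \<Rightarrow> nat \<Rightarrow> (nat \<Rightarrow> 'a list) \<Rightarrow> (nat \<Rightarrow> real) \<Rightarrow> real" where
  "L_GRPO p_th p_old p_ref q k g r =
     (1 / real (\<Sum>i<k. length (g i))) *
     (\<Sum>i<k. \<Sum>t<length (g i).
        ratioP p_th p_old q (g i) t * adv k r i - klD p_th p_ref q (g i) t)"

definition L_PRM :: "('q, 'a) policy \<Rightarrow> ('q, 'a) policy \<Rightarrow> ('q, 'a) policy \<Rightarrow> 'q
    \<Rightarrow> nat \<Rightarrow> (nat \<Rightarrow> 'a list) \<Rightarrow> (nat \<Rightarrow> real) \<Rightarrow> real" where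
  "L_PRM p_th p_old p_ref q k g r =
     (1 / real (\<Sum>i<k. length (g i))) *
     (\<Sum>i<k. \<Sum>t<length (g i).
        ratioP p_th p_old q (g i) t * step_adv k g r i t - klD p_th p_ref q (g i) t)"

end

theory Submission
  imports Defs
begin

lemma class_avg:
  fixes S :: "nat set" and h :: "nat \<Rightarrow> 'b" and F :: "'b \<Rightarrow> real" and r :: "nat \<Rightarrow> real"
  assumes fin: "finite S"
  shows "(\<Sum>i\<in>S. F (h i) * ((\<Sum>j\<in>{j\<in>S. h j = h i}. r j) / real (card {j\<in>S. h j = h i})))
       = (\<Sum>i\<in>S. F (h i) * r i)"
proof -
  let ?C = "\<lambda>i. {j\<in>S. h j = h i}"
  have "(\<Sum>i\<in>S. F (h i) * ((\<Sum>j\<in>?C i. r j) / real (card (?C i))))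
      = (\<Sum>i\<in>S. \<Sum>j\<in>S. (if h j = h i then F (h i) * r j / real (card (?C i)) else 0))"
    by (simp add: sum.If_cases[OF fin] sum_distrib_left sum_divide_distrib Int_def
          conj_commute)
  also have "\<dots> = (\<Sum>j\<in>S. \<Sum>i\<in>S. (if h j = h i then F (h i) * r j / real (card (?C i)) else 0))"
    by (rule sum.swap)
  also have "\<dots> = (\<Sum>j\<in>S. \<Sum>i\<in>S. (if h i = h j then F (h j) * r j / real (card (?C j)) else 0))"
    by (intro sum.cong refl) auto
  also have "\<dots> = (\<Sum>j\<in>S. real (card (?C j)) * (F (h j) * r j / real (card (?C j))))"
    by (simp add: sum.If_cases[OF fin] Int_def conj_commute)
  also have "\<dots> = (\<Sum>j\<in>S. F (h j) * r j)"
  proof (rule sum.cong[OF refl])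
    fix j assume "j \<in> S"
    then have "j \<in> ?C j" by simp
    then have "card (?C j) > 0" using fin by (metis (no_types, lifting) card_gt_0_iff empty_iff finite_subset mem_Collect_eq subsetI)
    then show "real (card (?C j)) * (F (h j) * r j / real (card (?C j))) = F (h j) * r j" by simp
  qed
  finally show ?thesis .
qed

theorem theorem1:
  fixes \<Sigma> :: "'a set"
    and p_th p_old p_ref :: "('q, 'a) policy"
    and q :: 'q
    and k :: nat
    and g :: "nat \<Rightarrow> 'a list"
    and r :: "nat \<Rightarrow> real"
  assumes "finite \<Sigma>"
    and "is_policy \<Sigma> p_th" and "is_policy \<Sigma> p_old" and "is_policy \<Sigma> p_ref"
    and "k \<ge> 1"
    and "\<forall>i<k. g i \<noteq> [] \<and> set (g i) \<subseteq> \<Sigma>"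
    and "r_std k r \<noteq> 0"
  shows "L_GRPO p_th p_old p_ref q k g r = L_PRM p_th p_old p_ref q k g r"
proof -
  define P where "P = (\<lambda>i t. ratioP p_th p_old q (g i) t)"
  define R where "R = (\<lambda>i t. step_reward k g r i t)"
  define M where "M = (\<Sum>i<k. length (g i))"
  define S where "S = (\<lambda>t. {i. i < k \<and> t < length (g i)})"
  have finS: "finite (S t)" for t unfolding S_def by simp
  have lenM: "length (g i) \<le> M" if "i < k" for i
    unfolding M_def using that by (intro member_le_sum) auto
  have swap: "(\<Sum>i<k. \<Sum>t<length (g i). X i t) = (\<Sum>t<M. \<Sum>i\<in>S t. X i t)" for X :: "nat \<Rightarrow> nat \<Rightarrow> real"
  proof -
    have "(\<Sum>i<k. \<Sum>t<length (g i). X i t) = (\<Sum>i<k. \<Sum>t<M. if t < length (g i) then X i t else 0)"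
    proof (rule sum.cong[OF refl])
      fix i assume "i \<in> {..<k}"
      then have e: "{..<M} \<inter> {t. t < length (g i)} = {..<length (g i)}" using lenM[of i] by auto
      show "(\<Sum>t<length (g i). X i t) = (\<Sum>t<M. if t < length (g i) then X i t else 0)"
      proof -
        have "(\<Sum>t<M. if t < length (g i) then X i t else 0) = (\<Sum>t<length (g i). if t < length (g i) then X i t else 0)"
          using lenM[of i] \<open>i \<in> {..<k}\<close> by (intro sum.mono_neutral_right) auto
        then show ?thesis by simp
      qed
    qed
    also have "\<dots> = (\<Sum>t<M. \<Sum>i<k. if t < length (g i) then X i t else 0)" by (rule sum.swap)
    also have "\<dots> = (\<Sum>t<M. \<Sum>i\<in>S t. X i t)"
    proof (rule sum.cong[OF refl])
      fix t
      have "S t = {i\<in>{..<k}. t < length (g i)}" unfolding S_def by auto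
      then show "(\<Sum>i<k. if t < length (g i) then X i t else 0) = (\<Sum>i\<in>S t. X i t)"
        by (simp add: sum.If_cases Int_def)
    qed
    finally show ?thesis .
  qed
  have key: "(\<Sum>i\<in>S t. P i t * R i t) = (\<Sum>i\<in>S t. P i t * r i)" for t
  proof -
    let ?h = "\<lambda>i. take (t+1) (g i)"
    let ?F = "\<lambda>w. ratioP p_th p_old q w t"
    have P_eq: "P i t = ?F (?h i)" if "i \<in> S t" for i
      using that unfolding P_def S_def ratioP_def by (simp add: min_def nth_take)
    have R_eq: "R i t = (\<Sum>j\<in>{j\<in>S t. ?h j = ?h i}. r j) / real (card {j\<in>S t. ?h j = ?h i})" for i
    proof -
      have "process_set k g i t = {j\<in>S t. ?h j = ?h i}" unfolding process_set_def S_def by auto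
      then show ?thesis unfolding R_def step_reward_def Let_def by simp
    qed
    have "(\<Sum>i\<in>S t. P i t * R i t) = (\<Sum>i\<in>S t. ?F (?h i) * ((\<Sum>j\<in>{j\<in>S t. ?h j = ?h i}. r j) / real (card {j\<in>S t. ?h j = ?h i})))"
      using P_eq R_eq by (intro sum.cong refl) auto
    also have "\<dots> = (\<Sum>i\<in>S t. ?F (?h i) * r i)" by (rule class_avg[OF finS])
    also have "\<dots> = (\<Sum>i\<in>S t. P i t * r i)" using P_eq by (intro sum.cong refl) auto
    finally show ?thesis .
  qed
  have main: "(\<Sum>i<k. \<Sum>t<length (g i). P i t * R i t) = (\<Sum>i<k. \<Sum>t<length (g i). P i t * r i)"
    unfolding swap using key by simp
  define s where "s = r_std k r"
  define m where "m = r_mean k r"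
  have A: "(\<Sum>i<k. \<Sum>t<length (g i). P i t * adv k r i - klD p_th p_ref q (g i) t)
      = (\<Sum>i<k. \<Sum>t<length (g i). P i t * r i) / s - (\<Sum>i<k. \<Sum>t<length (g i). P i t) * m / s
        - (\<Sum>i<k. \<Sum>t<length (g i). klD p_th p_ref q (g i) t)"
    unfolding adv_def s_def[symmetric] m_def[symmetric]
    by (simp add: sum_subtractf sum_divide_distrib sum_distrib_right diff_divide_distrib right_diff_distrib
        algebra_simps sum.distrib sum_distrib_left)
  have B: "(\<Sum>i<k. \<Sum>t<length (g i). P i t * step_adv k g r i t - klD p_th p_ref q (g i) t)
      = (\<Sum>i<k. \<Sum>t<length (g i). P i t * R i t) / s - (\<Sum>i<k. \<Sum>t<length (g i). P i t) * m / s
        - (\<Sum>i<k. \<Sum>t<length (g i). klD p_th p_ref q (g i) t)"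
    unfolding step_adv_def s_def[symmetric] m_def[symmetric] R_def[symmetric]
    by (simp add: sum_subtractf sum_divide_distrib sum_distrib_right diff_divide_distrib right_diff_distrib
        algebra_simps sum.distrib sum_distrib_left)
  have eq: "(\<Sum>i<k. \<Sum>t<length (g i). P i t * adv k r i - klD p_th p_ref q (g i) t)
      = (\<Sum>i<k. \<Sum>t<length (g i). P i t * step_adv k g r i t - klD p_th p_ref q (g i) t)"
    using A B main by simp
  show ?thesis
    unfolding L_GRPO_def L_PRM_def using eq unfolding P_def by simp
qed

end
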